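(* The DS matching and pricing scheme described in the context is budget balancing: $\sum_{d\in\mathcal{D}^*}q_d=\sum_{r\in\mathcal{R}^*}q_r$.
   Context: One decision epoch with finite sets $\mathcal{D}$ (drivers) and $\mathcal{R}$ (riders). Rider $r$ requests a trip of shortest-route length $h_r$ with destination $t_r$; $\tau_{dr}\ge0$ is the pick-up distance from driver $d$ to rider $r$, $\tau_d^{\min}=\min_{r}\tau_{dr}$, $\tau_r^{\min}=\min_d\tau_{dr}$. Public constants $\alpha,\beta>0$, and $f(t_r)$ is a given opportunity cost depending on the destination. Driver $d$ reports a bid $b_d$ and rider $r$ a bid $\delta_r$. For a potential match $(d,r)$ the valuations are $P_d=\alpha h_r+b_d(\tau_{dr}-\tau_d^{\min})+f(t_r)$ and $P_r=\beta h_r-\delta_r(\tau_{dr}-\tau_r^{\min})$, and the social welfare is $\sigma_{dr}=P_r-P_d$. Each potential match has a sensing gain $\zeta_{dr}\ge0$ not depending on bids. DS matching problem: maximize $\sum_{r,d}\zeta_{dr}x_{dr}$ subject to $\sum_r x_{dr}\le1$ $\forall d$, $\sum_d x_{dr}\le 1$ $\forall r$, $\sum_{r,d}\sigma_{dr}x_{dr}\ge0$, $x_{dr}\in\{0,1\}$; let $x^*$ be an optimal solution with value $U^*$, $\mathcal{D}^*,\mathcal{R}^*$ the sets of matched drivers and riders, and $V=\sum_{r,d}\sigma_{dr}x^*_{dr}$. For $d\in\mathcal{D}^*$ let $U^*_{d-}$ be the optimal value of the same problem with driver $d$ removed and $\Delta U_d=U^*-U^*_{d-}$; analogously $\Delta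 U_r=U^*-U^*_{r-}$ for $r\in\mathcal{R}^*$. Shares: $\lambda_d=\Delta U_d/(\sum_{d'\in\mathcal{D}^*}\Delta U_{d'}+\sum_{r'\in\mathcal{R}^*}\Delta U_{r'})$ and $\lambda_r=\Delta U_r/(\text{same denominator})$ (the denominator is taken to be nonzero so the shares are defined). Bonuses $\rho_d=V\lambda_d$, $\rho_r=V\lambda_r$. For a matched pair $(d,r)$ (with $P_d,P_r$ evaluated at that pair), the platform pays driver $d$ the amount $q_d=P_d+\rho_d$ and charges rider $r$ the amount $q_r=P_r-\rho_r$. *)

theory Defs
  imports Complex_Main
begin

definition tau_min_drv :: "'r set \<Rightarrow> ('d \<Rightarrow> 'r \<Rightarrow> real) \<Rightarrow> 'd \<Rightarrow> real" where
  "tau_min_drv R tau d = Min ((\<lambda>r. tau d r) ` R)"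

definition tau_min_rdr :: "'d set \<Rightarrow> ('d \<Rightarrow> 'r \<Rightarrow> real) \<Rightarrow> 'r \<Rightarrow> real" where
  "tau_min_rdr D tau r = Min ((\<lambda>d. tau d r) ` D)"

definition val_drv :: "real \<Rightarrow> ('l \<Rightarrow> real) \<Rightarrow> ('r \<Rightarrow> 'l) \<Rightarrow> ('r \<Rightarrow> real) \<Rightarrow> ('d \<Rightarrow> real)
    \<Rightarrow> ('d \<Rightarrow> 'r \<Rightarrow> real) \<Rightarrow> 'r set \<Rightarrow> 'd \<Rightarrow> 'r \<Rightarrow> real" where
  "val_drv \<alpha> f t h b tau R d r = \<alpha> * h r + b d * (tau d r - tau_min_drv R tau d) + f (t r)"

definition val_rdr :: "real \<Rightarrow> ('r \<Rightarrow> real) \<Rightarrow> ('r \<Rightarrow> real)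
    \<Rightarrow> ('d \<Rightarrow> 'r \<Rightarrow> real) \<Rightarrow> 'd set \<Rightarrow> 'd \<Rightarrow> 'r \<Rightarrow> real" where
  "val_rdr \<beta> h \<delta> tau D d r = \<beta> * h r - \<delta> r * (tau d r - tau_min_rdr D tau r)"

definition welfare :: "real \<Rightarrow> real \<Rightarrow> ('l \<Rightarrow> real) \<Rightarrow> ('r \<Rightarrow> 'l) \<Rightarrow> ('r \<Rightarrow> real)
    \<Rightarrow> ('d \<Rightarrow> real) \<Rightarrow> ('r \<Rightarrow> real) \<Rightarrow> ('d \<Rightarrow> 'r \<Rightarrow> real) \<Rightarrow> 'd set \<Rightarrow> 'r set
    \<Rightarrow> 'd \<Rightarrow> 'r \<Rightarrow> real" where
  "welfare \<alpha> \<beta> f t h b \<delta> tau D R d r =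
     val_rdr \<beta> h \<delta> tau D d r - val_drv \<alpha> f t h b tau R d r"

text \<open>A 0/1 assignment x is represented by the set M of pairs (d,r) with x_{dr} = 1.
  Feasibility for the DS matching problem.\<close>
definition ds_feasible :: "'d set \<Rightarrow> 'r set \<Rightarrow> ('d \<Rightarrow> 'r \<Rightarrow> real) \<Rightarrow> ('d \<times> 'r) set \<Rightarrow> bool" where
  "ds_feasible D R \<sigma> M \<longleftrightarrow>
     M \<subseteq> D \<times> R \<and>
     (\<forall>d r r'. (d, r) \<in> M \<and> (d, r') \<in> M \<longrightarrow> r = r') \<and>
     (\<forall>d d' r. (d, r) \<in> M \<and> (d', r) \<in> M \<longrightarrow> d = d') \<and>
     (\<Sum>(d, r)\<in>M. \<sigma> d r) \<ge> 0"

definition ds_objective :: "('d \<Rightarrow> 'r \<Rightarrow> real) \<Rightarrow> ('d \<times> 'r) set \<Rightarrow> real" where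
  "ds_objective \<zeta> M = (\<Sum>(d, r)\<in>M. \<zeta> d r)"

definition ds_opt_value :: "'d set \<Rightarrow> 'r set \<Rightarrow> ('d \<Rightarrow> 'r \<Rightarrow> real) \<Rightarrow> ('d \<Rightarrow> 'r \<Rightarrow> real) \<Rightarrow> real" where
  "ds_opt_value D R \<sigma> \<zeta> = Max (ds_objective \<zeta> ` {M. ds_feasible D R \<sigma> M})"

definition ds_optimal :: "'d set \<Rightarrow> 'r set \<Rightarrow> ('d \<Rightarrow> 'r \<Rightarrow> real) \<Rightarrow> ('d \<Rightarrow> 'r \<Rightarrow> real)
    \<Rightarrow> ('d \<times> 'r) set \<Rightarrow> bool" where
  "ds_optimal D R \<sigma> \<zeta> M \<longleftrightarrow> ds_feasible D R \<sigma> M \<and>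
     (\<forall>M'. ds_feasible D R \<sigma> M' \<longrightarrow> ds_objective \<zeta> M' \<le> ds_objective \<zeta> M)"

end

theory Submission
  imports Defs
begin

lemma bb_core:
  fixes M :: "('d \<times> 'r) set" and Pd :: "'d \<Rightarrow> 'r \<Rightarrow> real" and Pr :: "'d \<Rightarrow> 'r \<Rightarrow> real"
    and A :: "'d \<Rightarrow> real" and B :: "'r \<Rightarrow> real"
  assumes fin: "finite M"
    and u1: "\<forall>d r r'. (d, r) \<in> M \<and> (d, r') \<in> M \<longrightarrow> r = r'"
    and u2: "\<forall>d d' r. (d, r) \<in> M \<and> (d', r) \<in> M \<longrightarrow> d = d'"
    and den: "(\<Sum>d\<in>fst ` M. A d) + (\<Sum>r\<in>snd ` M. B r) \<noteq> 0"
  shows "(\<Sum>d\<in>fst ` M. Pd d (THE r. (d, r) \<in> M) + (\<Sum>(d, r)\<in>M. Pr d r - Pd d r) * (A d / ((\<Sum>d\<in>fst ` M. A d) + (\<Sum>r\<in>snd ` M. B r))))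
       = (\<Sum>r\<in>snd ` M. Pr (THE d. (d, r) \<in> M) r - (\<Sum>(d, r)\<in>M. Pr d r - Pd d r) * (B r / ((\<Sum>d\<in>fst ` M. A d) + (\<Sum>r\<in>snd ` M. B r))))"
proof -
  define S where "S = (\<Sum>d\<in>fst ` M. A d) + (\<Sum>r\<in>snd ` M. B r)"
  define V where "V = (\<Sum>(d, r)\<in>M. Pr d r - Pd d r)"
  have i1: "inj_on fst M" using u1 by (auto simp: inj_on_def)
  have i2: "inj_on snd M" unfolding inj_on_def by (metis prod.collapse u2)
  have e1: "(\<Sum>d\<in>fst ` M. Pd d (THE r. (d, r) \<in> M)) = (\<Sum>(d, r)\<in>M. Pd d r)"
  proof -
    have "(\<Sum>d\<in>fst ` M. Pd d (THE r. (d, r) \<in> M)) = (\<Sum>p\<in>M. Pd (fst p) (THE r. (fst p, r) \<in> M))"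
      using sum.reindex[OF i1] by simp
    also have "\<dots> = (\<Sum>(d, r)\<in>M. Pd d r)"
    proof (rule sum.cong)
      fix p assume p: "p \<in> M"
      obtain d r where pd: "p = (d, r)" by fastforce
      have "(THE r'. (d, r') \<in> M) = r" using p pd u1 by (intro the_equality) auto
      then show "Pd (fst p) (THE r. (fst p, r) \<in> M) = (case p of (d, r) \<Rightarrow> Pd d r)" using pd by simp
    qed simp
    finally show ?thesis .
  qed
  have e2: "(\<Sum>r\<in>snd ` M. Pr (THE d. (d, r) \<in> M) r) = (\<Sum>(d, r)\<in>M. Pr d r)"
  proof -
    have "(\<Sum>r\<in>snd ` M. Pr (THE d. (d, r) \<in> M) r) = (\<Sum>p\<in>M. Pr (THE d. (d, snd p) \<in> M) (snd p))"
      using sum.reindex[OF i2] by simp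
    also have "\<dots> = (\<Sum>(d, r)\<in>M. Pr d r)"
    proof (rule sum.cong)
      fix p assume p: "p \<in> M"
      obtain d r where pd: "p = (d, r)" by fastforce
      have "(THE d'. (d', r) \<in> M) = d" using p pd u2 by (intro the_equality) auto
      then show "Pr (THE d. (d, snd p) \<in> M) (snd p) = (case p of (d, r) \<Rightarrow> Pr d r)" using pd by simp
    qed simp
    finally show ?thesis .
  qed
  have eV: "V = (\<Sum>(d, r)\<in>M. Pr d r) - (\<Sum>(d, r)\<in>M. Pd d r)"
    unfolding V_def by (simp add: case_prod_beta sum_subtractf)
  have r1: "(\<Sum>d\<in>fst ` M. V * (A d / S)) = V * (\<Sum>d\<in>fst ` M. A d) / S"
    by (simp add: sum_distrib_left[symmetric] sum_divide_distrib[symmetric])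
  have r2: "(\<Sum>r\<in>snd ` M. V * (B r / S)) = V * (\<Sum>r\<in>snd ` M. B r) / S"
    by (simp add: sum_distrib_left[symmetric] sum_divide_distrib[symmetric])
  have sumS: "V * (\<Sum>d\<in>fst ` M. A d) / S + V * (\<Sum>r\<in>snd ` M. B r) / S = V"
  proof -
    have "S \<noteq> 0" using den unfolding S_def .
    have "V * (\<Sum>d\<in>fst ` M. A d) / S + V * (\<Sum>r\<in>snd ` M. B r) / S = V * S / S"
      unfolding S_def by (simp add: add_divide_distrib distrib_left)
    also have "\<dots> = V" using \<open>S \<noteq> 0\<close> by simp
    finally show ?thesis .
  qed
  show ?thesis
    unfolding S_def[symmetric] V_def[symmetric]
    using e1 e2 eV r1 r2 sumS
    by (simp add: sum.distrib sum_subtractf)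
qed

theorem proposition2:
  fixes D :: "'d set" and R :: "'r set"
    and \<alpha> \<beta> :: real
    and f :: "'l \<Rightarrow> real" and t :: "'r \<Rightarrow> 'l" and h :: "'r \<Rightarrow> real"
    and tau :: "'d \<Rightarrow> 'r \<Rightarrow> real" and \<zeta> :: "'d \<Rightarrow> 'r \<Rightarrow> real"
    and b :: "'d \<Rightarrow> real" and \<delta> :: "'r \<Rightarrow> real"
    and M :: "('d \<times> 'r) set"
  assumes finD: "finite D" and finR: "finite R"
    and alpha_pos: "\<alpha> > 0" and beta_pos: "\<beta> > 0"
    and tau_nonneg: "\<forall>d r. tau d r \<ge> 0"
    and zeta_nonneg: "\<forall>d r. \<zeta> d r \<ge> 0"
    and opt: "ds_optimal D R (welfare \<alpha> \<beta> f t h b \<delta> tau D R) \<zeta> M"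
    and denom_nz:
      "(let Ustar = ds_opt_value D R (welfare \<alpha> \<beta> f t h b \<delta> tau D R) \<zeta>;
            dU_d = (\<lambda>d. Ustar - ds_opt_value (D - {d}) R (welfare \<alpha> \<beta> f t h b \<delta> tau (D - {d}) R) \<zeta>);
            dU_r = (\<lambda>r. Ustar - ds_opt_value D (R - {r}) (welfare \<alpha> \<beta> f t h b \<delta> tau D (R - {r})) \<zeta>)
        in (\<Sum>d\<in>fst ` M. dU_d d) + (\<Sum>r\<in>snd ` M. dU_r r) \<noteq> 0)"
  shows
    "(let \<sigma> = welfare \<alpha> \<beta> f t h b \<delta> tau D R;
          Ustar = ds_opt_value D R \<sigma> \<zeta>;
          Dstar = fst ` M; Rstar = snd ` M;
          V = (\<Sum>(d, r)\<in>M. \<sigma> d r);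
          dU_d = (\<lambda>d. Ustar - ds_opt_value (D - {d}) R (welfare \<alpha> \<beta> f t h b \<delta> tau (D - {d}) R) \<zeta>);
          dU_r = (\<lambda>r. Ustar - ds_opt_value D (R - {r}) (welfare \<alpha> \<beta> f t h b \<delta> tau D (R - {r})) \<zeta>);
          denom = (\<Sum>d\<in>Dstar. dU_d d) + (\<Sum>r\<in>Rstar. dU_r r);
          \<rho>_d = (\<lambda>d. V * (dU_d d / denom));
          \<rho>_r = (\<lambda>r. V * (dU_r r / denom));
          partner_of_d = (\<lambda>d. THE r. (d, r) \<in> M);
          partner_of_r = (\<lambda>r. THE d. (d, r) \<in> M);
          q_d = (\<lambda>d. val_drv \<alpha> f t h b tau R d (partner_of_d d) + \<rho>_d d);
          q_r = (\<lambda>r. val_rdr \<beta> h \<delta> tau D (partner_of_r r) r - \<rho>_r r)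
      in (\<Sum>d\<in>Dstar. q_d d) = (\<Sum>r\<in>Rstar. q_r r))"
proof -
  have feas: "ds_feasible D R (welfare \<alpha> \<beta> f t h b \<delta> tau D R) M"
    using opt by (simp add: ds_optimal_def)
  have finM: "finite M" using feas finD finR unfolding ds_feasible_def
    by (meson finite_SigmaI finite_subset)
  show ?thesis
    using bb_core[OF finM _ _ denom_nz[unfolded Let_def],
      of "\<lambda>d r. val_drv \<alpha> f t h b tau R d r" "\<lambda>d r. val_rdr \<beta> h \<delta> tau D d r"] feas
    unfolding Let_def ds_feasible_def welfare_def by simp
qed

end
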